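(* Let $k\in\{-1,0,1\}$, $\beta>0$, let $\delta_k>0$ be the positive real solution of $\delta^3+k\delta-\frac{3\beta}{2}=0$, and let $R_b>0$ (with $R_b<1$ if $k=1$). Define \[ R_{\mathrm{AH}}=\frac{1}{\sqrt{\delta_k^2+k}},\quad C_k=\frac{1}{\sqrt{1-kR_b^2}+\delta_kR_b},\quad x_\Sigma=\frac{R_b\delta_k}{C_k},\quad \lambda_1=\frac{\beta R_b^3}{C_k},\quad \lambda_2=\frac{\beta C_k^2}{2\delta_k^3}, \] and, for $u>0$ and $r\ge x_\Sigma u$, $B(u,r)=1-\lambda_1\frac{u}{r}-\lambda_2\frac{r^2}{u^2}$; the apparent horizons of the exterior metric $g_{\mathrm{ext}}=-B(u,r)\,du^2-2\,du\,dr+r^2d\Omega^2$ on $r>x_\Sigma u$ are the hypersurfaces where $B=0$. Then: (1) If $R_b>R_{\mathrm{AH}}$, then $B(u,r)<0$ for all $u>0$, $r>x_\Sigma u$; in particular there is no apparent horizon in the exterior region. (2) If $R_b=R_{\mathrm{AH}}$, then $B(u,x_\Sigma u)=0$ for all $u>0$ (the exterior apparent horizon coincides with the matching surface $r=x_\Sigma u$), and $B(u,r)<0$ for all $r>x_\Sigma u$. (3) If $R_b<R_{\mathrm{AH}}$, then there exists $x_{\mathrm{AH}}>x_\Sigma$ such that the exterior metric has an apparent horizon at $r=x_{\mathrm{AH}}u$; moreover $B(u,r)>0$ for $x_\Sigma u<r<x_{\mathrm{AH}}u$ and $B(u,r)<0$ for $r>x_{\mathrm{AH}}u$.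
   Context: This is the exterior of the self-similar stellar model: the interior is $-dt^2+a(t)^2\big(\frac{dR^2}{1-kR^2}+R^2d\Omega^2\big)$ with $a(t)=\delta_k t$, the matching surface is $R=R_b$ in the interior and $r=x_\Sigma u$ in the exterior (with $u=C_kt$), and $R_{\mathrm{AH}}$ is the comoving radius of the interior apparent horizon. $d\Omega^2=d\theta^2+\sin^2\theta\,d\psi^2$. *)

theory Defs
  imports Complex_Main
begin

definition R_AH :: "real \<Rightarrow> real \<Rightarrow> real" where
  "R_AH k \<delta> = 1 / sqrt (\<delta>^2 + k)"

definition C_const :: "real \<Rightarrow> real \<Rightarrow> real \<Rightarrow> real" where
  "C_const k \<delta> Rb = 1 / (sqrt (1 - k * Rb^2) + \<delta> * Rb)"

definition x_Sigma :: "real \<Rightarrow> real \<Rightarrow> real \<Rightarrow> real" where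
  "x_Sigma k \<delta> Rb = Rb * \<delta> / C_const k \<delta> Rb"

definition lambda1 :: "real \<Rightarrow> real \<Rightarrow> real \<Rightarrow> real \<Rightarrow> real" where
  "lambda1 k \<beta> \<delta> Rb = \<beta> * Rb^3 / C_const k \<delta> Rb"

definition lambda2 :: "real \<Rightarrow> real \<Rightarrow> real \<Rightarrow> real \<Rightarrow> real" where
  "lambda2 k \<beta> \<delta> Rb = \<beta> * (C_const k \<delta> Rb)^2 / (2 * \<delta>^3)"

definition B_ext :: "real \<Rightarrow> real \<Rightarrow> real \<Rightarrow> real \<Rightarrow> real \<Rightarrow> real \<Rightarrow> real" where
  "B_ext k \<beta> \<delta> Rb u r = 1 - lambda1 k \<beta> \<delta> Rb * u / r - lambda2 k \<beta> \<delta> Rb * r^2 / u^2"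

end

theory Submission
  imports Defs
begin

lemma mono_g:
  fixes l1 l2 xs x y :: real
  assumes "l2 > 0" "xs > 0" "l1 = 2 * l2 * xs^3" "xs \<le> y" "y < x"
  shows "1 - l1 / x - l2 * x^2 < 1 - l1 / y - l2 * y^2"
proof -
  have y0: "y > 0" "x > 0" using assms by auto
  have a: "xs^3 \<le> y^3" using assms by (simp add: power_mono)
  have c1: "y*y*y < x * y * y" using assms y0 by (simp add: mult_strict_right_mono)
  have c2: "y*y*y < x * x * y" using assms y0 c1
    by (smt (verit) mult_strict_right_mono mult_strict_left_mono mult.commute mult.assoc)
  have "(x+y)*x*y = x*x*y + x*y*y" by (simp add: algebra_simps)
  hence "2*xs^3 < (x+y)*x*y" using a c1 c2 by (simp add: power3_eq_cube)
  hence b: "l1 < l2*((x+y)*x*y)" using assms by (simp add: mult_strict_left_mono)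
  have "(1 - l1 / y - l2 * y^2) - (1 - l1 / x - l2 * x^2) = (x - y) * (l2*((x+y)*x*y) - l1) / (x*y)"
    using y0 by (simp add: field_simps power2_eq_square)
  also have "... > 0" using b y0 assms by simp
  finally show ?thesis by simp
qed

lemma B_eq: "u > 0 \<Longrightarrow> B_ext k \<beta> \<delta> Rb u r =
   1 - lambda1 k \<beta> \<delta> Rb / (r/u) - lambda2 k \<beta> \<delta> Rb * (r/u)^2"
  unfolding B_ext_def by (simp add: power_divide)

theorem mainTheorem4:
  fixes k \<beta> \<delta> Rb :: real
  assumes hk: "k \<in> {-1, 0, 1}"
    and h\<beta>: "\<beta> > 0"
    and h\<delta>pos: "\<delta> > 0"
    and h\<delta>eq: "\<delta>^3 + k * \<delta> - 3 * \<beta> / 2 = 0"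
    and hRb: "Rb > 0"
    and hRb1: "k = 1 \<longrightarrow> Rb < 1"
  shows
    "(Rb > R_AH k \<delta> \<longrightarrow>
        (\<forall>u r. u > 0 \<and> r > x_Sigma k \<delta> Rb * u \<longrightarrow> B_ext k \<beta> \<delta> Rb u r < 0))
   \<and> (Rb = R_AH k \<delta> \<longrightarrow>
        (\<forall>u. u > 0 \<longrightarrow> B_ext k \<beta> \<delta> Rb u (x_Sigma k \<delta> Rb * u) = 0) \<and>
        (\<forall>u r. u > 0 \<and> r > x_Sigma k \<delta> Rb * u \<longrightarrow> B_ext k \<beta> \<delta> Rb u r < 0))
   \<and> (Rb < R_AH k \<delta> \<longrightarrow>
        (\<exists>xAH > x_Sigma k \<delta> Rb.
           (\<forall>u. u > 0 \<longrightarrow> B_ext k \<beta> \<delta> Rb u (xAH * u) = 0) \<and>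
           (\<forall>u r. u > 0 \<and> x_Sigma k \<delta> Rb * u < r \<and> r < xAH * u \<longrightarrow> B_ext k \<beta> \<delta> Rb u r > 0) \<and>
           (\<forall>u r. u > 0 \<and> r > xAH * u \<longrightarrow> B_ext k \<beta> \<delta> Rb u r < 0)))"
proof -
  define C where "C = C_const k \<delta> Rb"
  define xs where "xs = x_Sigma k \<delta> Rb"
  define l1 where "l1 = lambda1 k \<beta> \<delta> Rb"
  define l2 where "l2 = lambda2 k \<beta> \<delta> Rb"
  define s where "s = \<delta>^2 + k"
  define g where "g = (\<lambda>x::real. 1 - l1 / x - l2 * x^2)"
  have k1: "1 - k * Rb^2 \<ge> 0"
  proof -
    consider "k = -1" | "k = 0" | "k = 1" using hk by auto
    then show ?thesis
    proof cases
      case 3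
      have "Rb^2 < 1" using hRb1 3 hRb 
      proof -
        have "Rb*Rb < Rb*1" using hRb1 3 hRb by (intro mult_strict_left_mono) auto
        thus ?thesis using hRb1 3 by (simp add: power2_eq_square)
      qed
      then show ?thesis using 3 by simp
    qed auto
  qed
  have C0: "C > 0" unfolding C_def C_const_def using h\<delta>pos hRb k1
    by (simp add: add_nonneg_pos)
  have xs0: "xs > 0" unfolding xs_def x_Sigma_def C_def[symmetric] using C0 h\<delta>pos hRb by simp
  have l2pos: "l2 > 0" unfolding l2_def lambda2_def C_def[symmetric] using C0 h\<delta>pos h\<beta> by simp
  have l1eq: "l1 = 2 * l2 * xs^3"
    unfolding l1_def l2_def xs_def lambda1_def lambda2_def x_Sigma_def C_def[symmetric]
    using C0 h\<delta>pos by (simp add: field_simps power3_eq_cube power2_eq_square)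
  have s0: "s > 0"
  proof -
    consider "k = -1" | "k = 0" | "k = 1" using hk by auto
    then show ?thesis
    proof cases
      case 1
      have "\<delta> * (\<delta>^2 - 1) > 0" using h\<delta>eq h\<beta> 1 by (simp add: algebra_simps power3_eq_cube power2_eq_square)
      hence "\<delta>^2 - 1 > 0" using h\<delta>pos by (simp add: zero_less_mult_iff)
      then show ?thesis using 1 s_def by simp
    qed (use h\<delta>pos in \<open>simp_all add: s_def add_nonneg_pos\<close>)
  qed
  have gxs: "g xs = 1 - s * Rb^2"
  proof -
    have "3 * \<beta> / 2 = \<delta> * s" using h\<delta>eq unfolding s_def by (simp add: algebra_simps power3_eq_cube power2_eq_square)
    hence "\<beta> = 2 * \<delta> * s / 3" by simp
    thus ?thesis unfolding g_def l1_def l2_def xs_def lambda1_def lambda2_def x_Sigma_def C_def[symmetric]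
      using C0 h\<delta>pos by (simp add: field_simps power3_eq_cube power2_eq_square)
  qed
  have RAH: "R_AH k \<delta> = 1 / sqrt s" unfolding R_AH_def s_def by simp
  have sq: "Rb * sqrt s = sqrt (Rb^2 * s)" using hRb by (simp add: real_sqrt_mult)
  have gt: "Rb > R_AH k \<delta> \<longleftrightarrow> s * Rb^2 > 1"
  proof -
    have "Rb > R_AH k \<delta> \<longleftrightarrow> Rb * sqrt s > 1" unfolding RAH using s0 by (simp add: divide_less_eq mult.commute)
    also have "... \<longleftrightarrow> s * Rb^2 > 1" using sq by (simp add: mult.commute)
    finally show ?thesis .
  qed
  have eqv: "Rb = R_AH k \<delta> \<longleftrightarrow> s * Rb^2 = 1"
  proof -
    have "Rb = R_AH k \<delta> \<longleftrightarrow> Rb * sqrt s = 1" unfolding RAH using s0 by (auto simp: eq_divide_eq mult.commute)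
    also have "... \<longleftrightarrow> s * Rb^2 = 1" using sq by (simp add: mult.commute)
    finally show ?thesis .
  qed
  have mono: "\<And>x y. xs \<le> y \<Longrightarrow> y < x \<Longrightarrow> g x < g y"
    unfolding g_def using mono_g[OF l2pos xs0 l1eq] by blast
  have Bg: "\<And>u r. u > 0 \<Longrightarrow> B_ext k \<beta> \<delta> Rb u r = g (r/u)"
    unfolding g_def l1_def l2_def using B_eq by blast
  have div1: "\<And>u r a :: real. u > 0 \<Longrightarrow> r > a * u \<longleftrightarrow> r / u > a" by (rule pos_less_divide_eq[symmetric])
  have div2: "\<And>u r a :: real. u > 0 \<Longrightarrow> r < a * u \<longleftrightarrow> r / u < a" by (rule pos_divide_less_eq[symmetric])
  have gxsu: "\<And>u. u > 0 \<Longrightarrow> B_ext k \<beta> \<delta> Rb u (xs * u) = g xs"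
    using Bg by simp
  have P1: "\<forall>u r. u > 0 \<and> r > xs * u \<longrightarrow> B_ext k \<beta> \<delta> Rb u r < 0" if "g xs \<le> 0"
  proof (intro allI impI)
    fix u r :: real assume h: "u > 0 \<and> r > xs * u"
    hence "r/u > xs" using div1 by blast
    hence "g (r/u) < g xs" using mono by blast
    thus "B_ext k \<beta> \<delta> Rb u r < 0" using Bg h that by simp
  qed
  have P3: "\<exists>xAH > xs.
           (\<forall>u. u > 0 \<longrightarrow> B_ext k \<beta> \<delta> Rb u (xAH * u) = 0) \<and>
           (\<forall>u r. u > 0 \<and> xs * u < r \<and> r < xAH * u \<longrightarrow> B_ext k \<beta> \<delta> Rb u r > 0) \<and>
           (\<forall>u r. u > 0 \<and> r > xAH * u \<longrightarrow> B_ext k \<beta> \<delta> Rb u r < 0)" if gp: "g xs > 0"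
  proof -
    define M where "M = xs + sqrt (2/l2) + 1"
    have sq0: "sqrt (2/l2) \<ge> 0" using l2pos by simp
    have M1: "M > sqrt (2/l2)" "M > xs" "M > 0" unfolding M_def using sq0 xs0 by linarith+
    have "M^2 > (sqrt (2/l2))^2" using M1(1) sq0 by (intro power_strict_mono) auto
    hence "M^2 > 2/l2" using l2pos by simp
    hence "l2 * M^2 > 2" using l2pos by (simp add: field_simps)
    moreover have "l1 / M > 0" using l1eq l2pos xs0 M1 by simp
    ultimately have gM: "g M < 0" unfolding g_def by simp
    have "\<forall>x. xs \<le> x \<and> x \<le> M \<longrightarrow> isCont g x"
      using xs0 unfolding g_def by (auto intro!: continuous_intros)
    then obtain x where x: "x \<ge> xs" "x \<le> M" "g x = 0"
      using IVT2[of g M 0 xs] gM gp M1 by auto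
    have xgt: "x > xs" using x gp by (cases "x = xs") auto
    show ?thesis
    proof (intro exI[of _ x] conjI allI impI)
      show "x > xs" by fact
      fix u :: real assume "u > 0" thus "B_ext k \<beta> \<delta> Rb u (x * u) = 0" using Bg x by simp
    next
      fix u r :: real assume h: "u > 0 \<and> xs * u < r \<and> r < x * u"
      hence "r/u > xs" "r/u < x" using div1 div2 by blast+
      hence "g x < g (r/u)" using mono by auto
      thus "B_ext k \<beta> \<delta> Rb u r > 0" using Bg h x by simp
    next
      fix u r :: real assume h: "u > 0 \<and> r > x * u"
      hence "r/u > x" using div1 by blast
      hence "g (r/u) < g x" using mono xgt by auto
      thus "B_ext k \<beta> \<delta> Rb u r < 0" using Bg h x by simp
    qed
  qed
  show ?thesis
    unfolding xs_def[symmetric]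
  proof (intro conjI impI)
    assume "Rb > R_AH k \<delta>" thus "\<forall>u r. u > 0 \<and> r > xs * u \<longrightarrow> B_ext k \<beta> \<delta> Rb u r < 0"
      using P1 gt gxs by simp
  next
    assume "Rb = R_AH k \<delta>" thus "\<forall>u. u > 0 \<longrightarrow> B_ext k \<beta> \<delta> Rb u (xs * u) = 0"
      using gxsu eqv gxs by simp
  next
    assume "Rb = R_AH k \<delta>" thus "\<forall>u r. u > 0 \<and> r > xs * u \<longrightarrow> B_ext k \<beta> \<delta> Rb u r < 0"
      using P1 eqv gxs by simp
  next
    assume a: "Rb < R_AH k \<delta>"
    have "s * Rb^2 < 1" using gt eqv a by (metis linorder_neqE_linordered_idom not_less_iff_gr_or_eq)
    thus "\<exists>xAH > xs.
           (\<forall>u. u > 0 \<longrightarrow> B_ext k \<beta> \<delta> Rb u (xAH * u) = 0) \<and>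
           (\<forall>u r. u > 0 \<and> xs * u < r \<and> r < xAH * u \<longrightarrow> B_ext k \<beta> \<delta> Rb u r > 0) \<and>
           (\<forall>u r. u > 0 \<and> r > xAH * u \<longrightarrow> B_ext k \<beta> \<delta> Rb u r < 0)"
      using P3 gxs by simp
  qed
qed

end
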